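(* Let $V$ be an $n$-dimensional complex vector space, $\Lambda(V\otimes V^* )$ the exterior algebra on $V\otimes V^*$, and $X=(x_{ij})_{1\le i,j\le n}\in\operatorname{Mat}_{n,n}(\Lambda(V\otimes V^* ))$. Then $$nX^{2n-1}-\operatorname{tr}(X^1)X^{2n-2}-\operatorname{tr}(X^3)X^{2n-4}-\cdots-\operatorname{tr}(X^{2n-3})X^2-\operatorname{tr}(X^{2n-1})X^0=0,$$ i.e. $nX^{2n-1}-\sum_{k=0}^{n-1}\operatorname{tr}(X^{2k+1})X^{2n-2-2k}=0$, where $X^0$ is the identity matrix.
   Context: $e_1,\ldots,e_n$ is a basis of $V$, $e_i^*$ its dual basis, $x_{ij}=e_i\otimes e_j^*$ is the standard basis of $V\otimes V^*$. Products in the exterior algebra are wedge products; matrix products are taken with entries multiplied in the order written. *)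

theory Defs
  imports Complex_Main
begin

text \<open>Exterior algebra on the n^2-dimensional complex vector space with basis
  x_ij = e_i (x) e_j^* (0 <= i,j < n), encoded by the index i*n+j.
  An element is its coefficient function on monomials: a finite set S of
  basis indices stands for the wedge product of the basis vectors in S
  taken in increasing order.\<close>

type_synonym ext = "nat set \<Rightarrow> complex"

definition ext_zero :: ext where "ext_zero = (\<lambda>S. 0)"
definition ext_one :: ext where "ext_one = (\<lambda>S. if S = {} then 1 else 0)"
definition ext_add :: "ext \<Rightarrow> ext \<Rightarrow> ext" where "ext_add a b = (\<lambda>S. a S + b S)"
definition ext_diff :: "ext \<Rightarrow> ext \<Rightarrow> ext" where "ext_diff a b = (\<lambda>S. a S - b S)"
definition ext_smul :: "complex \<Rightarrow> ext \<Rightarrow> ext" where "ext_smul c a = (\<lambda>S. c * a S)"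

text \<open>Sign of reordering e_S /\ e_T into increasing order (S, T disjoint).\<close>
definition ext_sign :: "nat set \<Rightarrow> nat set \<Rightarrow> complex" where
  "ext_sign S T = (-1) ^ card {(s, t). s \<in> S \<and> t \<in> T \<and> t < s}"

definition ext_mul :: "ext \<Rightarrow> ext \<Rightarrow> ext" where
  "ext_mul a b = (\<lambda>U. \<Sum>S\<in>Pow U. ext_sign S (U - S) * a S * b (U - S))"

definition ext_gen :: "nat \<Rightarrow> ext" where
  "ext_gen m = (\<lambda>S. if S = {m} then 1 else 0)"

definition ext_sum :: "('a \<Rightarrow> ext) \<Rightarrow> 'a set \<Rightarrow> ext" where
  "ext_sum f A = (\<lambda>S. \<Sum>a\<in>A. f a S)"

text \<open>n x n matrices over the exterior algebra (entries for i,j < n are relevant).\<close>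
type_synonym emat = "nat \<Rightarrow> nat \<Rightarrow> ext"

definition genX :: "nat \<Rightarrow> emat" where
  "genX n = (\<lambda>i j. ext_gen (i * n + j))"

definition emat_mul :: "nat \<Rightarrow> emat \<Rightarrow> emat \<Rightarrow> emat" where
  "emat_mul n A B = (\<lambda>i j. ext_sum (\<lambda>k. ext_mul (A i k) (B k j)) {..<n})"

definition emat_id :: emat where
  "emat_id = (\<lambda>i j. if i = j then ext_one else ext_zero)"

primrec emat_pow :: "nat \<Rightarrow> emat \<Rightarrow> nat \<Rightarrow> emat" where
  "emat_pow n A 0 = emat_id"
| "emat_pow n A (Suc m) = emat_mul n (emat_pow n A m) A"

definition emat_tr :: "nat \<Rightarrow> emat \<Rightarrow> ext" where
  "emat_tr n A = ext_sum (\<lambda>i. A i i) {..<n}"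

end

theory Submission
  imports Defs "Jordan_Normal_Form.Determinant"
begin



lift_definition pd :: "'a::comm_semiring_1 poly \<Rightarrow> 'a poly" is "\<lambda>p k. of_nat (Suc k) * coeff p (Suc k)"
proof -
  fix p :: "'a poly"
  have "\<forall>\<^sub>\<infinity> k. coeff p (Suc k) = 0" using MOST_coeff_eq_0[of p] unfolding MOST_nat by (metis Suc_lessD less_Suc_eq)
  thus "\<forall>\<^sub>\<infinity> k. of_nat (Suc k) * coeff p (Suc k) = 0" by (rule MOST_mono) simp
qed

lemma coeff_pd: "coeff (pd p) k = of_nat (Suc k) * coeff p (Suc k)"
  by transfer simp

lemma pd_add: "pd (p + q) = pd p + pd q"
  by (rule poly_eqI) (simp add: coeff_pd algebra_simps)
lemma pd_minus: "pd (- p :: 'a :: comm_ring_1 poly) = - pd p"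
  by (rule poly_eqI) (simp add: coeff_pd algebra_simps)
lemma pd_diff: "pd (p - q :: 'a :: comm_ring_1 poly) = pd p - pd q"
  by (rule poly_eqI) (simp add: coeff_pd algebra_simps)
lemma pd_smult: "pd (smult a p) = smult a (pd p)"
  by (rule poly_eqI) (simp add: coeff_pd algebra_simps)
lemma pd_pCons: "pd (pCons a p) = p + pCons 0 (pd p)"
  by (rule poly_eqI) (auto simp: coeff_pd coeff_pCons algebra_simps split: nat.split)
lemma pd_const[simp]: "pd [:a:] = 0"
  by (rule poly_eqI) (simp add: coeff_pd)
lemma pd_0[simp]: "pd 0 = 0"
  by (rule poly_eqI) (simp add: coeff_pd)
lemma pd_1[simp]: "pd 1 = 0"
  by (rule poly_eqI) (simp add: coeff_pd)
lemma pd_mult: "pd (p * q) = p * pd q + q * pd p"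
  by (induct p) (auto simp: pd_add pd_smult pd_pCons algebra_simps)
lemma pd_sum: "pd (sum f A) = (\<Sum>a\<in>A. pd (f a))"
  by (induct A rule: infinite_finite_induct) (auto simp: pd_add)
lemma pd_prod: "pd (prod f (as)) = (\<Sum>a\<in>as. prod f (as - {a}) * pd (f a))"
proof (induct as rule: infinite_finite_induct)
  case (insert a as)
  then have id: "prod f (insert a as) = f a * prod f as"
    "\<And>g. sum g (insert a as) = g a + sum g as"
    "insert a as - {a} = as"
    by auto
  have "prod f (insert a as - {b}) = f a * prod f (as - {b})" if "b \<in> as" for b
  proof -
    from \<open>a \<notin> as\<close> that have *: "insert a as - {b} = insert a (as - {b})"
      by auto
    show ?thesis
      unfolding * by (subst prod.insert) (use insert in auto)
  qed
  then show ?case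
    unfolding id pd_mult insert(3) sum_distrib_left
    by (auto simp add: ac_simps intro!: sum.cong)
qed auto
lemma pd_of_int_mult: "pd (of_int k * (q::'a::comm_ring_1 poly)) = of_int k * pd q"
proof -
  have "pd (of_int k :: 'a poly) = 0" by (simp add: of_int_poly)
  thus ?thesis by (simp add: pd_mult)
qed


lemma jacobi:
  fixes M :: "'a::comm_ring_1 poly mat"
  assumes M: "M \<in> carrier_mat n n"
  shows "pd (det M) = (\<Sum>a<n. \<Sum>j<n. pd (M$$(a,j)) * cofactor M a j)"
proof -
  define Ma where "Ma a = mat n n (\<lambda>(i,j). if i = a then pd (M$$(i,j)) else M$$(i,j))" for a
  have Ma: "Ma a \<in> carrier_mat n n" for a unfolding Ma_def by auto
  have del: "mat_delete (Ma a) a j = mat_delete M a j" if "a < n" "j < n" for a j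
    using M that unfolding Ma_def mat_delete_def by (auto intro!: eq_matI)
  have detMa: "det (Ma a) = (\<Sum>j<n. pd (M$$(a,j)) * cofactor M a j)" if a: "a < n" for a
  proof -
    have "det (Ma a) = (\<Sum>j<n. Ma a $$ (a,j) * cofactor (Ma a) a j)"
      by (rule laplace_expansion_row[OF Ma a])
    also have "\<dots> = (\<Sum>j<n. pd (M$$(a,j)) * cofactor M a j)"
      using a del unfolding cofactor_def by (auto simp: Ma_def intro!: sum.cong)
    finally show ?thesis .
  qed
  have detMa2: "det (Ma a) = (\<Sum>p\<in>{p. p permutes {0..<n}}. signof p * 
      ((\<Prod>i\<in>{0..<n} - {a}. M $$ (i, p i)) * pd (M $$ (a, p a))))" if a: "a < n" for a
  proof -
    have "det (Ma a) = (\<Sum>p\<in>{p. p permutes {0..<n}}. signof p * (\<Prod>i=0..<n. Ma a $$ (i, p i)))"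
      by (rule det_def'[OF Ma])
    also have "\<dots> = (\<Sum>p\<in>{p. p permutes {0..<n}}. signof p * 
      ((\<Prod>i\<in>{0..<n} - {a}. M $$ (i, p i)) * pd (M $$ (a, p a))))"
    proof (rule sum.cong[OF refl])
      fix p assume "p \<in> {p. p permutes {0..<n}}"
      hence p: "p permutes {0..<n}" by simp
      have pi: "i < n \<Longrightarrow> p i < n" for i using p by (meson atLeastLessThan_iff permutes_in_image zero_le)
      have "(\<Prod>i=0..<n. Ma a $$ (i, p i)) = Ma a $$ (a, p a) * (\<Prod>i\<in>{0..<n} - {a}. Ma a $$ (i, p i))"
        using a by (subst prod.remove[of _ a]) auto
      also have "(\<Prod>i\<in>{0..<n} - {a}. Ma a $$ (i, p i)) = (\<Prod>i\<in>{0..<n} - {a}. M $$ (i, p i))"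
        using pi by (auto simp: Ma_def intro!: prod.cong)
      also have "Ma a $$ (a, p a) = pd (M $$ (a, p a))" using a pi by (auto simp: Ma_def)
      finally show "signof p * (\<Prod>i=0..<n. Ma a $$ (i, p i)) = signof p * 
        ((\<Prod>i\<in>{0..<n} - {a}. M $$ (i, p i)) * pd (M $$ (a, p a)))" by (simp add: ac_simps)
    qed
    finally show ?thesis .
  qed
  have "pd (det M) = (\<Sum>p\<in>{p. p permutes {0..<n}}. signof p * pd (\<Prod>i=0..<n. M $$ (i, p i)))"
    by (simp add: det_def'[OF M] pd_sum pd_of_int_mult)
  also have "\<dots> = (\<Sum>p\<in>{p. p permutes {0..<n}}. \<Sum>a\<in>{0..<n}. signof p * 
      ((\<Prod>i\<in>{0..<n} - {a}. M $$ (i, p i)) * pd (M $$ (a, p a))))"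
    by (simp add: pd_prod sum_distrib_left)
  also have "\<dots> = (\<Sum>a\<in>{0..<n}. det (Ma a))"
    by (subst sum.swap) (auto simp: detMa2 intro!: sum.cong)
  also have "\<dots> = (\<Sum>a<n. \<Sum>j<n. pd (M$$(a,j)) * cofactor M a j)"
    by (auto simp: detMa atLeast0LessThan intro!: sum.cong)
  finally show ?thesis .
qed

definition mtr :: "nat \<Rightarrow> 'a::comm_monoid_add mat \<Rightarrow> 'a" where "mtr n A = (\<Sum>i<n. A $$ (i,i))"

interpretation cpoly: semiring_hom "\<lambda>a::'a::comm_semiring_1. [:a:]"
  by unfold_locales (auto simp: one_pCons mult.commute)

lemma pow_mat_Suc_left: assumes A: "A \<in> carrier_mat n n"
  shows "A ^\<^sub>m Suc k = A * A ^\<^sub>m k"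
proof (induct k)
  case 0 thus ?case using A by simp
next
  case (Suc k)
  have "A ^\<^sub>m Suc (Suc k) = (A * A ^\<^sub>m k) * A" using Suc by simp
  also have "\<dots> = A * (A ^\<^sub>m k * A)" using A by (subst assoc_mult_mat) auto
  finally show ?case by simp
qed

lemma mult_entry: "A \<in> carrier_mat n m \<Longrightarrow> B \<in> carrier_mat m k \<Longrightarrow> i < n \<Longrightarrow> j < k \<Longrightarrow>
  (A * B) $$ (i,j) = (\<Sum>l<m. A $$ (i,l) * B $$ (l,j))"
  by (simp add: scalar_prod_def atLeast0LessThan)

lemma nilpotent_of_traces:
  fixes Y :: "'a::comm_ring_1 mat"
  assumes tf: "\<And>k (c::'a). 0 < k \<Longrightarrow> of_nat k * c = 0 \<Longrightarrow> c = 0"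
    and Y: "Y \<in> carrier_mat n n" and tr: "\<And>k. 1 \<le> k \<Longrightarrow> mtr n (Y ^\<^sub>m k) = 0"
  shows "Y ^\<^sub>m n = 0\<^sub>m n n"
proof -
  define C where "C = map_mat (\<lambda>a. [:a:]) Y"
  define T :: "'a poly" where "T = monom 1 1"
  define M where "M = mat n n (\<lambda>(i,j). (if i = j then 1 else 0) - T * C $$ (i,j))"
  define B where "B = adj_mat M"
  define d where "d = det M"
  have C: "C \<in> carrier_mat n n" using Y unfolding C_def by auto
  have M: "M \<in> carrier_mat n n" unfolding M_def by auto
  have B: "B \<in> carrier_mat n n" using adj_mat(1)[OF M] unfolding B_def .
  have BM: "B * M = d \<cdot>\<^sub>m 1\<^sub>m n" using adj_mat(3)[OF M] unfolding B_def d_def .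
  have key: "B $$ (i,j) = (if i = j then d else 0) + T * (B * C) $$ (i,j)" if ij: "i < n" "j < n" for i j
  proof -
    have "(B * M) $$ (i,j) = (\<Sum>l<n. B $$ (i,l) * M $$ (l,j))"
      using B M ij by (simp add: scalar_prod_def atLeast0LessThan)
    also have "\<dots> = (\<Sum>l<n. B $$ (i,l) * (if l = j then 1 else 0)) - T * (\<Sum>l<n. B $$ (i,l) * C $$ (l,j))"
      using ij by (simp add: M_def algebra_simps sum_subtractf sum_distrib_left)
    also have "(\<Sum>l<n. B $$ (i,l) * (if l = j then 1 else 0)) = B $$ (i,j)"
      using ij by (simp add: if_distrib sum.delta cong: if_cong)
    also have "(\<Sum>l<n. B $$ (i,l) * C $$ (l,j)) = (B * C) $$ (i,j)"
      using B C ij by (simp add: scalar_prod_def atLeast0LessThan)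
    finally have "(B * M) $$ (i,j) = B $$ (i,j) - T * (B * C) $$ (i,j)" .
    moreover have "(B * M) $$ (i,j) = (if i = j then d else 0)" using BM ij by simp
    ultimately show ?thesis by (simp add: algebra_simps)
  qed
  have Cpow: "C ^\<^sub>m k = map_mat (\<lambda>a. [:a:]) (Y ^\<^sub>m k)" for k
    unfolding C_def by (rule cpoly.mat_hom_pow[OF Y, symmetric])
  have trC: "mtr n (C ^\<^sub>m k) = 0" if "1 \<le> k" for k
  proof -
    have "mtr n (C ^\<^sub>m k) = [: mtr n (Y ^\<^sub>m k) :]"
      unfolding Cpow mtr_def using Y by (simp add: cpoly.hom_sum)
    thus ?thesis using tr[OF that] by simp
  qed
  have CS: "C * C ^\<^sub>m k = C ^\<^sub>m Suc k" for k using pow_mat_Suc_left[OF C] by simp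
  have BCk: "(B * C ^\<^sub>m k) $$ (i,j) = d * (C ^\<^sub>m k) $$ (i,j) + T * (B * C ^\<^sub>m Suc k) $$ (i,j)"
    if ij: "i<n" "j<n" for i j k
  proof -
    have Ck: "C ^\<^sub>m k \<in> carrier_mat n n" using C by simp
    have "(B * C ^\<^sub>m k) $$ (i,j) = (\<Sum>l<n. B $$ (i,l) * (C ^\<^sub>m k) $$ (l,j))"
      by (rule mult_entry[OF B Ck ij])
    also have "\<dots> = (\<Sum>l<n. ((if i = l then d else 0) + T * (B * C) $$ (i,l)) * (C ^\<^sub>m k) $$ (l,j))"
      using ij key by (auto intro!: sum.cong)
    also have "\<dots> = (\<Sum>l<n. (if i = l then d * (C ^\<^sub>m k) $$ (l,j) else 0) + T * ((B * C) $$ (i,l) * (C ^\<^sub>m k) $$ (l,j)))"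
      by (rule sum.cong) (auto simp: algebra_simps)
    also have "\<dots> = (\<Sum>l<n. (if i = l then d * (C ^\<^sub>m k) $$ (l,j) else 0)) + T * (\<Sum>l<n. (B * C) $$ (i,l) * (C ^\<^sub>m k) $$ (l,j))"
      by (simp only: sum.distrib sum_distrib_left)
    also have "(\<Sum>l<n. (if i = l then d * (C ^\<^sub>m k) $$ (l,j) else 0)) = d * (C ^\<^sub>m k) $$ (i,j)"
      using ij by (simp add: sum.delta)
    also have "(\<Sum>l<n. (B * C) $$ (i,l) * (C ^\<^sub>m k) $$ (l,j)) = ((B * C) * C ^\<^sub>m k) $$ (i,j)"
      by (rule mult_entry[OF _ Ck ij, symmetric]) (use B C in simp)
    also have "(B * C) * C ^\<^sub>m k = B * C ^\<^sub>m Suc k"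
      using B C Ck by (simp add: assoc_mult_mat[OF B C Ck] CS)
    finally show ?thesis .
  qed
  have mtrBC: "mtr n (B * C ^\<^sub>m k) = d * mtr n (C ^\<^sub>m k) + T * mtr n (B * C ^\<^sub>m Suc k)" for k
    unfolding mtr_def by (simp add: BCk sum.distrib sum_distrib_left)
  have dvdm: "\<forall>k. 1 \<le> k \<longrightarrow> monom 1 m dvd mtr n (B * C ^\<^sub>m k)" for m
  proof (induct m)
    case 0 thus ?case by simp
  next
    case (Suc m)
    show ?case
    proof (intro allI impI)
      fix k :: nat assume k: "1 \<le> k"
      have "mtr n (B * C ^\<^sub>m k) = T * mtr n (B * C ^\<^sub>m Suc k)" using mtrBC trC[OF k] by simp
      moreover have "monom 1 (Suc m) = T * monom 1 m" unfolding T_def by (simp add: mult_monom)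
      moreover have "monom 1 m dvd mtr n (B * C ^\<^sub>m Suc k)" using Suc[rule_format, of "Suc k"] by (simp del: pow_mat.simps)
      ultimately show "monom 1 (Suc m) dvd mtr n (B * C ^\<^sub>m k)" by (simp add: mult_dvd_mono)
    qed
  qed
  have pdT: "pd T = 1" unfolding T_def by (rule poly_eqI) (simp add: coeff_pd coeff_monom)
  have pdM: "pd (M $$ (a,j)) = - C $$ (a,j)" if "a < n" "j < n" for a j
  proof -
    have "C $$ (a,j) = [: Y $$ (a,j) :]" using that Y unfolding C_def by simp
    thus ?thesis using that unfolding M_def by (simp add: pd_diff pd_mult pdT pd_smult)
  qed
  have cof: "cofactor M a j = B $$ (j,a)" if "a < n" "j < n" for a j
    using that M unfolding B_def adj_mat_def by simp
  have "pd d = (\<Sum>a<n. \<Sum>j<n. - (B $$ (j,a) * C $$ (a,j)))"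
    unfolding d_def jacobi[OF M] using pdM cof by (auto intro!: sum.cong simp: mult.commute)
  also have "\<dots> = - mtr n (B * C)"
    unfolding mtr_def using B C
    by (subst sum.swap) (simp add: scalar_prod_def atLeast0LessThan sum_negf)
  finally have pdd: "pd d = - mtr n (B * C)" .
  have cpd: "coeff (pd d) k = 0" for k
  proof -
    have C1: "C ^\<^sub>m 1 = C" using C by simp
    have "monom 1 (Suc k) dvd mtr n (B * C ^\<^sub>m 1)" using dvdm[of "Suc k"] by auto
    hence "monom 1 (Suc k) dvd pd d" unfolding C1 pdd by simp
    thus ?thesis unfolding monom_1_dvd_iff' by simp
  qed
  have cd: "coeff d (Suc k) = 0" for k
    using cpd[of k] tf[of "Suc k" "coeff d (Suc k)"] by (simp add: coeff_pd)
  interpret ev0: comm_ring_hom "\<lambda>p::'a poly. poly p 0" by unfold_locales auto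
  have "map_mat (\<lambda>p. poly p 0) M = 1\<^sub>m n" unfolding M_def T_def by (rule eq_matI) (auto simp: poly_monom)
  hence "poly d 0 = 1" unfolding d_def using ev0.hom_det[of M] by simp
  hence cd0: "coeff d 0 = 1" by (simp add: poly_0_coeff_0)
  have d1: "d = 1"
  proof (rule poly_eqI)
    fix k show "coeff d k = coeff 1 k" by (cases k) (simp_all add: cd cd0)
  qed
  have coefBC: "\<forall>k i j. i < n \<longrightarrow> j < n \<longrightarrow> coeff ((B * C ^\<^sub>m k) $$ (i,j)) m = (Y ^\<^sub>m (k+m)) $$ (i,j)" for m
  proof (induct m)
    case 0 show ?case
    proof (intro allI impI)
      fix k i j assume ij: "i < n" "j < n"
      have "(B * C ^\<^sub>m k) $$ (i,j) = [:(Y ^\<^sub>m k) $$ (i,j):] + T * (B * C ^\<^sub>m Suc k) $$ (i,j)"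
        using BCk[OF ij, of k] Y ij by (simp add: d1 Cpow)
      thus "coeff ((B * C ^\<^sub>m k) $$ (i,j)) 0 = (Y ^\<^sub>m (k+0)) $$ (i,j)" by (simp add: T_def coeff_monom_mult)
    qed
  next
    case (Suc m)
    show ?case
    proof (intro allI impI)
      fix k i j assume ij: "i < n" "j < n"
      have "(B * C ^\<^sub>m k) $$ (i,j) = [:(Y ^\<^sub>m k) $$ (i,j):] + T * (B * C ^\<^sub>m Suc k) $$ (i,j)"
        using BCk[OF ij, of k] Y ij by (simp add: d1 Cpow)
      hence "coeff ((B * C ^\<^sub>m k) $$ (i,j)) (Suc m) = coeff ((B * C ^\<^sub>m Suc k) $$ (i,j)) m"
        by (simp add: T_def coeff_monom_mult)
      also have "\<dots> = (Y ^\<^sub>m (Suc k + m)) $$ (i,j)" using Suc ij by blast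
      finally show "coeff ((B * C ^\<^sub>m k) $$ (i,j)) (Suc m) = (Y ^\<^sub>m (k + Suc m)) $$ (i,j)" by simp
    qed
  qed
  show ?thesis
  proof (rule eq_matI)
    fix i j assume i: "i < dim_row (0\<^sub>m n n :: 'a mat)" and j: "j < dim_col (0\<^sub>m n n :: 'a mat)"
    hence ij: "i < n" "j < n" by auto
    have "B * C ^\<^sub>m 0 = B" using B C by simp
    hence "(Y ^\<^sub>m n) $$ (i,j) = coeff (B $$ (i,j)) n" using coefBC[of n] ij by (metis add_0)
    also have "\<dots> = 0"
    proof (rule coeff_eq_0)
      have Md: "mat_delete M j i \<in> carrier_mat (n-1) (n-1)" using mat_delete_carrier[OF M] .
      have degM: "degree (M $$ (a,b)) \<le> 1" if "a < n" "b < n" for a b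
      proof -
        have "degree (T * C $$ (a,b)) \<le> degree T + degree (C $$ (a,b))" by (rule degree_mult_le)
        moreover have "degree T = 1" unfolding T_def by (simp add: degree_monom_eq)
        moreover have "degree (C $$ (a,b)) = 0" using that Y unfolding C_def by simp
        ultimately have "degree (T * C $$ (a,b)) \<le> 1" by simp
        thus ?thesis using that unfolding M_def by (auto intro: order_trans[OF degree_diff_le_max])
      qed
      have "degree (det (mat_delete M j i)) \<le> 1 * (n-1)"
        by (rule degree_det_le[OF _ Md]) (use ij M degM in \<open>auto simp: mat_delete_def\<close>)
      moreover have "B $$ (i,j) = (-1)^(j+i) * det (mat_delete M j i)"
        using ij M unfolding B_def adj_mat_def cofactor_def by simp
      moreover have "degree ((-1::'a poly)^(j+i)) = 0"
        using degree_power_le[of "-1::'a poly" "j+i"] by simp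
      ultimately have "degree (B $$ (i,j)) \<le> n - 1"
        using degree_mult_le[of "(-1::'a poly)^(j+i)" "det (mat_delete M j i)"] by simp
      thus "degree (B $$ (i,j)) < n" using ij by linarith
    qed
    finally show "(Y ^\<^sub>m n) $$ (i, j) = 0\<^sub>m n n $$ (i, j)" using ij by simp
  qed (use Y in auto)
qed



definition inv_set :: "nat set \<Rightarrow> nat set \<Rightarrow> (nat \<times> nat) set" where
  "inv_set A B = {(s, t). s \<in> A \<and> t \<in> B \<and> t < s}"

lemma ext_sign_inv: "ext_sign A B = (-1) ^ card (inv_set A B)"
  unfolding ext_sign_def inv_set_def by simp

lemma inv_set_fin: "finite A \<Longrightarrow> finite B \<Longrightarrow> finite (inv_set A B)"
  unfolding inv_set_def by (rule finite_subset[of _ "A \<times> B"]) auto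

lemma card_inv_Un_left: assumes "finite A" "finite B" "finite C" "A \<inter> B = {}"
  shows "card (inv_set (A \<union> B) C) = card (inv_set A C) + card (inv_set B C)"
proof -
  have "inv_set (A \<union> B) C = inv_set A C \<union> inv_set B C" unfolding inv_set_def by auto
  moreover have "inv_set A C \<inter> inv_set B C = {}" using assms unfolding inv_set_def by auto
  ultimately show ?thesis using assms by (simp add: card_Un_disjoint inv_set_fin)
qed

lemma card_inv_Un_right: assumes "finite A" "finite B" "finite C" "B \<inter> C = {}"
  shows "card (inv_set A (B \<union> C)) = card (inv_set A B) + card (inv_set A C)"
proof -
  have "inv_set A (B \<union> C) = inv_set A B \<union> inv_set A C" unfolding inv_set_def by auto
  moreover have "inv_set A B \<inter> inv_set A C = {}" using assms unfolding inv_set_def by auto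
  ultimately show ?thesis using assms by (simp add: card_Un_disjoint inv_set_fin)
qed

lemma card_inv_swap: assumes "finite A" "finite B" "A \<inter> B = {}"
  shows "card (inv_set A B) + card (inv_set B A) = card A * card B"
proof -
  have "A \<times> B = inv_set A B \<union> (\<lambda>(t,s). (s,t)) ` inv_set B A" 
    using assms unfolding inv_set_def by (auto simp: image_iff)
  moreover have "inv_set A B \<inter> (\<lambda>(t,s). (s,t)) ` inv_set B A = {}" unfolding inv_set_def by auto
  moreover have "card ((\<lambda>(t,s). (s,t)) ` inv_set B A) = card (inv_set B A)"
    by (rule card_image) (auto simp: inj_on_def)
  ultimately show ?thesis using assms 
    by (metis card_Un_disjoint card_cartesian_product finite_imageI inv_set_fin)
qed

lemma sign_Un_left: "finite A \<Longrightarrow> finite B \<Longrightarrow> finite C \<Longrightarrow> A \<inter> B = {} \<Longrightarrow>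
  ext_sign (A \<union> B) C = ext_sign A C * ext_sign B C"
  by (simp add: ext_sign_inv card_inv_Un_left power_add)

lemma sign_Un_right: "finite A \<Longrightarrow> finite B \<Longrightarrow> finite C \<Longrightarrow> B \<inter> C = {} \<Longrightarrow>
  ext_sign A (B \<union> C) = ext_sign A B * ext_sign A C"
  by (simp add: ext_sign_inv card_inv_Un_right power_add)

lemma sign_sq: "ext_sign A B * ext_sign A B = 1"
  by (simp add: ext_sign_inv power_mult_distrib[symmetric] flip: power_add mult_2)

lemma sign_swap: "finite A \<Longrightarrow> finite B \<Longrightarrow> A \<inter> B = {} \<Longrightarrow>
  ext_sign B A = (-1) ^ (card A * card B) * ext_sign A B"
proof -
  assume a: "finite A" "finite B" "A \<inter> B = {}"
  have "ext_sign A B * ext_sign B A = (-1) ^ (card A * card B)"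
    using card_inv_swap[OF a] by (simp add: ext_sign_inv flip: power_add)
  hence "ext_sign A B * (ext_sign A B * ext_sign B A) = ext_sign A B * (-1) ^ (card A * card B)" by simp
  thus ?thesis by (simp add: mult.assoc[symmetric] sign_sq mult.commute)
qed

lemma sign_assoc: assumes "finite R" "finite T" "finite W" "R \<inter> T = {}" "R \<inter> W = {}" "T \<inter> W = {}"
  shows "ext_sign R T * ext_sign (R \<union> T) W = ext_sign R (T \<union> W) * ext_sign T W"
  using assms by (simp add: sign_Un_left sign_Un_right)

lemma sum_sub_sub: assumes "finite U"
  shows "(\<Sum>S\<in>Pow U. \<Sum>R\<in>Pow S. H R S) = (\<Sum>R\<in>Pow U. \<Sum>T\<in>Pow (U - R). H R (R \<union> T))"
proof -
  have fin1: "finite (Pow S)" if "S \<in> Pow U" for S using assms that by (auto intro: finite_subset)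
  have "(\<Sum>S\<in>Pow U. \<Sum>R\<in>Pow S. H R S) = (\<Sum>(S,R)\<in>Sigma (Pow U) Pow. H R S)"
    by (rule sum.Sigma) (use assms fin1 in auto)
  also have "\<dots> = (\<Sum>(R,T)\<in>Sigma (Pow U) (\<lambda>R. Pow (U - R)). H R (R \<union> T))"
    by (rule sum.reindex_bij_witness[where i="\<lambda>(R,T). (R \<union> T, R)" and j="\<lambda>(S,R). (R, S - R)"]) (auto simp: sup.absorb2 Un_absorb1 Un_absorb2)
  also have "\<dots> = (\<Sum>R\<in>Pow U. \<Sum>T\<in>Pow (U - R). H R (R \<union> T))"
    by (rule sum.Sigma[symmetric]) (use assms in auto)
  finally show ?thesis .
qed

lemma ext_mul_inf: "infinite U \<Longrightarrow> ext_mul a b U = 0"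
  unfolding ext_mul_def by simp

lemma ext_mul_assoc: "ext_mul (ext_mul a b) c = ext_mul a (ext_mul b c)"
proof
  fix U
  show "ext_mul (ext_mul a b) c U = ext_mul a (ext_mul b c) U"
  proof (cases "finite U")
    case False thus ?thesis by (simp add: ext_mul_inf)
  next
    case True
    have "ext_mul (ext_mul a b) c U = (\<Sum>S\<in>Pow U. \<Sum>R\<in>Pow S.
        ext_sign S (U - S) * (ext_sign R (S - R) * a R * b (S - R)) * c (U - S))"
      unfolding ext_mul_def by (simp add: sum_distrib_left sum_distrib_right)
    also have "\<dots> = (\<Sum>R\<in>Pow U. \<Sum>T\<in>Pow (U - R).
        ext_sign (R \<union> T) (U - (R \<union> T)) * (ext_sign R (R \<union> T - R) * a R * b (R \<union> T - R)) * c (U - (R \<union> T)))"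
      by (rule sum_sub_sub[OF True])
    also have "\<dots> = (\<Sum>R\<in>Pow U. \<Sum>T\<in>Pow (U - R).
        ext_sign R (U - R) * a R * (ext_sign T (U - R - T) * b T * c (U - R - T)))"
    proof (intro sum.cong refl)
      fix R T assume R: "R \<in> Pow U" and T: "T \<in> Pow (U - R)"
      have fR: "finite R" "finite T" "finite (U - R - T)" using R T True by (auto intro: finite_subset)
      have e1: "R \<union> T - R = T" "U - (R \<union> T) = U - R - T" using T by auto
      have e2: "U - R = T \<union> (U - R - T)" using T by auto
      have "ext_sign R T * ext_sign (R \<union> T) (U - R - T) = ext_sign R (T \<union> (U - R - T)) * ext_sign T (U - R - T)"
        by (rule sign_assoc) (use fR T in auto)
      hence "ext_sign R T * ext_sign (R \<union> T) (U - R - T) = ext_sign R (U - R) * ext_sign T (U - R - T)"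
        using e2 by simp
      thus "ext_sign (R \<union> T) (U - (R \<union> T)) * (ext_sign R (R \<union> T - R) * a R * b (R \<union> T - R)) * c (U - (R \<union> T)) =
        ext_sign R (U - R) * a R * (ext_sign T (U - R - T) * b T * c (U - R - T))"
        unfolding e1 by (simp add: algebra_simps)
    qed
    also have "\<dots> = ext_mul a (ext_mul b c) U"
      unfolding ext_mul_def by (simp add: sum_distrib_left Diff_Diff_Int Int_commute)
    finally show ?thesis .
  qed
qed

definition fin0 :: "ext \<Rightarrow> bool" where "fin0 a \<longleftrightarrow> (\<forall>S. infinite S \<longrightarrow> a S = 0)"

lemma fin0_mul: "fin0 (ext_mul a b)" unfolding fin0_def by (simp add: ext_mul_inf)
lemma fin0_zero: "fin0 ext_zero" unfolding fin0_def ext_zero_def by simp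
lemma fin0_one: "fin0 ext_one" unfolding fin0_def ext_one_def by auto
lemma fin0_gen: "fin0 (ext_gen m)" unfolding fin0_def ext_gen_def by auto
lemma fin0_add: "fin0 a \<Longrightarrow> fin0 b \<Longrightarrow> fin0 (ext_add a b)" unfolding fin0_def ext_add_def by auto
lemma fin0_diff: "fin0 a \<Longrightarrow> fin0 b \<Longrightarrow> fin0 (ext_diff a b)" unfolding fin0_def ext_diff_def by auto
lemma fin0_smul: "fin0 a \<Longrightarrow> fin0 (ext_smul c a)" unfolding fin0_def ext_smul_def by auto
lemma fin0_sum: "(\<And>x. x \<in> A \<Longrightarrow> fin0 (f x)) \<Longrightarrow> fin0 (ext_sum f A)" unfolding fin0_def ext_sum_def by auto

lemma sign_empty_left[simp]: "ext_sign {} U = 1" unfolding ext_sign_def by simp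
lemma sign_empty_right[simp]: "ext_sign U {} = 1" unfolding ext_sign_def by simp

lemma ext_mul_one_left: "fin0 b \<Longrightarrow> ext_mul ext_one b = b"
proof
  fix U assume b: "fin0 b"
  show "ext_mul ext_one b U = b U"
  proof (cases "finite U")
    case False thus ?thesis using b by (simp add: ext_mul_inf fin0_def)
  next
    case True
    have "ext_mul ext_one b U = (\<Sum>S\<in>Pow U. if S = {} then b U else 0)"
      unfolding ext_mul_def by (rule sum.cong) (auto simp: ext_one_def)
    also have "\<dots> = b U" using True by (subst sum.delta) auto
    finally show ?thesis .
  qed
qed

lemma ext_mul_one_right: "fin0 b \<Longrightarrow> ext_mul b ext_one = b"
proof
  fix U assume b: "fin0 b"
  show "ext_mul b ext_one U = b U"
  proof (cases "finite U")
    case False thus ?thesis using b by (simp add: ext_mul_inf fin0_def)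
  next
    case True
    have "ext_mul b ext_one U = (\<Sum>S\<in>Pow U. if S = U then b U else 0)"
      unfolding ext_mul_def by (rule sum.cong) (auto simp: ext_one_def)
    also have "\<dots> = b U" using True by (subst sum.delta) auto
    finally show ?thesis .
  qed
qed

typedef gr = "{a::ext. fin0 a}" morphisms rg Abs_gr
  by (rule exI[of _ ext_zero]) (simp add: fin0_zero)

setup_lifting type_definition_gr

instantiation gr :: ring_1
begin
lift_definition zero_gr :: gr is ext_zero by (simp add: fin0_zero)
lift_definition one_gr :: gr is ext_one by (simp add: fin0_one)
lift_definition plus_gr :: "gr \<Rightarrow> gr \<Rightarrow> gr" is ext_add by (simp add: fin0_add)
lift_definition minus_gr :: "gr \<Rightarrow> gr \<Rightarrow> gr" is ext_diff by (simp add: fin0_diff)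
lift_definition uminus_gr :: "gr \<Rightarrow> gr" is "ext_smul (-1)" by (simp add: fin0_smul)
lift_definition times_gr :: "gr \<Rightarrow> gr \<Rightarrow> gr" is ext_mul by (simp add: fin0_mul)
instance
proof
  fix a b c :: gr
  show "a * b * c = a * (b * c)" by transfer (rule ext_mul_assoc)
  show "a + b + c = a + (b + c)" by transfer (simp add: ext_add_def algebra_simps)
  show "a + b = b + a" by transfer (simp add: ext_add_def algebra_simps)
  show "0 + a = a" by transfer (simp add: ext_add_def ext_zero_def)
  show "- a + a = 0" by transfer (simp add: ext_add_def ext_zero_def ext_smul_def)
  show "a - b = a + - b" by transfer (simp add: ext_add_def ext_diff_def ext_smul_def)
  show "(a + b) * c = a * c + b * c" by transfer (simp add: ext_add_def ext_mul_def algebra_simps sum.distrib fun_eq_iff)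
  show "a * (b + c) = a * b + a * c" by transfer (simp add: ext_add_def ext_mul_def algebra_simps sum.distrib fun_eq_iff)
  show "1 * a = a" by transfer (rule ext_mul_one_left)
  show "a * 1 = a" by transfer (rule ext_mul_one_right)
  show "(0::gr) \<noteq> 1" by transfer (simp add: ext_zero_def ext_one_def fun_eq_iff)
qed
end


lemma rg_mult: "rg (a * b) = ext_mul (rg a) (rg b)" by transfer simp
lemma rg_add: "rg (a + b) = ext_add (rg a) (rg b)" by transfer simp
lemma rg_diff: "rg (a - b) = ext_diff (rg a) (rg b)" by transfer simp
lemma rg_uminus: "rg (- a) = ext_smul (-1) (rg a)" by transfer simp
lemma rg_zero: "rg 0 = ext_zero" by transfer simp
lemma rg_one: "rg 1 = ext_one" by transfer simp
lemma rg_fin0: "infinite S \<Longrightarrow> rg a S = 0" using rg[of a] by (simp add: fin0_def)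
lemma rg_sum: "rg (sum f A) = ext_sum (\<lambda>x. rg (f x)) A"
  by (induct A rule: infinite_finite_induct) (auto simp: rg_zero rg_add ext_sum_def ext_zero_def ext_add_def)

definition par :: "nat \<Rightarrow> gr \<Rightarrow> bool" where
  "par k a \<longleftrightarrow> (\<forall>S. even (card S) \<noteq> even k \<longrightarrow> rg a S = 0)"

lemma par_zero[simp]: "par k 0" unfolding par_def rg_zero ext_zero_def by simp
lemma par_one[simp]: "par 0 1" unfolding par_def rg_one ext_one_def by simp
lemma par_add: "par k a \<Longrightarrow> par k b \<Longrightarrow> par k (a + b)" unfolding par_def rg_add ext_add_def by simp
lemma par_diff: "par k a \<Longrightarrow> par k b \<Longrightarrow> par k (a - b)" unfolding par_def rg_diff ext_diff_def by simp
lemma par_uminus: "par k a \<Longrightarrow> par k (- a)" unfolding par_def rg_uminus ext_smul_def by simp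
lemma par_sum: "(\<And>x. x \<in> A \<Longrightarrow> par k (f x)) \<Longrightarrow> par k (sum f A)"
  by (induct A rule: infinite_finite_induct) (auto intro: par_add)
lemma par_mod: "par k a \<longleftrightarrow> par (k mod 2) a" unfolding par_def by simp

lemma par_mult: assumes a: "par i a" and b: "par j b" shows "par (i + j) (a * b)"
  unfolding par_def
proof (intro allI impI)
  fix U :: "nat set" assume U: "even (card U) \<noteq> even (i + j)"
  show "rg (a * b) U = 0"
  proof (cases "finite U")
    case False thus ?thesis by (simp add: rg_fin0)
  next
    case True
    have "ext_sign S (U - S) * rg a S * rg b (U - S) = 0" if "S \<in> Pow U" for S
    proof -
      have "card U = card S + card (U - S)" using that True
        by (metis Pow_iff card_Diff_subset finite_subset le_add_diff_inverse card_mono)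
      hence "even (card S) \<noteq> even i \<or> even (card (U - S)) \<noteq> even j" using U by auto
      thus ?thesis using a b unfolding par_def by auto
    qed
    thus ?thesis unfolding rg_mult ext_mul_def by (intro sum.neutral) blast
  qed
qed

lemma comm_gen: assumes a: "par i a" and b: "par j b"
  shows "b * a = (if odd i \<and> odd j then - (a * b) else a * b)"
proof -
  define c :: complex where "c = (if odd i \<and> odd j then -1 else 1)"
  have "rg (b * a) U = c * rg (a * b) U" for U
  proof (cases "finite U")
    case False thus ?thesis by (simp add: rg_fin0)
  next
    case True
    have "rg (b * a) U = (\<Sum>T\<in>Pow U. ext_sign T (U - T) * rg b T * rg a (U - T))"
      unfolding rg_mult ext_mul_def ..
    also have "\<dots> = (\<Sum>S\<in>Pow U. ext_sign (U - S) S * rg b (U - S) * rg a S)"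
      by (rule sum.reindex_bij_witness[where i="\<lambda>S. U - S" and j="\<lambda>S. U - S"]) (auto simp: double_diff)
    also have "\<dots> = (\<Sum>S\<in>Pow U. c * (ext_sign S (U - S) * rg a S * rg b (U - S)))"
    proof (rule sum.cong[OF refl])
      fix S assume S: "S \<in> Pow U"
      have fin: "finite S" "finite (U - S)" using S True by (auto intro: finite_subset)
      have sw: "ext_sign (U - S) S = (-1) ^ (card S * card (U - S)) * ext_sign S (U - S)"
        by (rule sign_swap) (use fin in auto)
      show "ext_sign (U - S) S * rg b (U - S) * rg a S = c * (ext_sign S (U - S) * rg a S * rg b (U - S))"
      proof (cases "rg a S = 0 \<or> rg b (U - S) = 0")
        case True thus ?thesis by auto
      next
        case False
        hence "even (card S) = even i" "even (card (U - S)) = even j" using a b unfolding par_def by auto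
        hence "(-1::complex) ^ (card S * card (U - S)) = c" unfolding c_def by (auto simp: minus_one_power_iff)
        thus ?thesis unfolding sw by simp
      qed
    qed
    also have "\<dots> = c * rg (a * b) U" unfolding rg_mult ext_mul_def by (simp add: sum_distrib_left)
    finally show ?thesis .
  qed
  hence "rg (b * a) = (if odd i \<and> odd j then rg (- (a * b)) else rg (a * b))"
    unfolding c_def by (auto simp: rg_uminus ext_smul_def fun_eq_iff)
  note h = this
  show ?thesis
  proof (cases "odd i \<and> odd j")
    case True
    with h have "rg (b * a) = rg (- (a * b))" by simp
    hence "b * a = - (a * b)" by (simp only: rg_inject)
    thus ?thesis using True by simp
  next
    case False
    with h have "rg (b * a) = rg (a * b)" by simp
    hence "b * a = a * b" by (simp only: rg_inject)
    thus ?thesis using False by (simp only: if_False)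
  qed
qed

lemma rg_of_nat_mult: "rg (of_nat k * x) S = of_nat k * rg x S"
  by (induct k) (auto simp: rg_zero rg_add ext_add_def ext_zero_def distrib_right algebra_simps)

lemma gr_tf: "0 < k \<Longrightarrow> of_nat k * (x::gr) = 0 \<Longrightarrow> x = 0"
proof -
  assume k: "0 < k" and h: "of_nat k * x = 0"
  have "rg x S = 0" for S using arg_cong[OF h, of "\<lambda>y. rg y S"] k by (simp add: rg_of_nat_mult rg_zero ext_zero_def)
  hence "rg x = rg 0" by (auto simp: rg_zero ext_zero_def)
  thus ?thesis by (simp only: rg_inject)
qed


lemma comm_ev: "par 0 a \<Longrightarrow> par 0 b \<Longrightarrow> a * b = b * a"
proof -
  assume "par 0 a" "par 0 b"
  from comm_gen[OF this] show ?thesis by (simp only: even_zero simp_thms if_False not_True_eq_False)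
qed

typedef ev = "{a::gr. par 0 a}" morphisms re Abs_ev
  by (rule exI[of _ 0]) simp

setup_lifting type_definition_ev

instantiation ev :: comm_ring_1
begin
lift_definition zero_ev :: ev is 0 by simp
lift_definition one_ev :: ev is 1 by simp
lift_definition plus_ev :: "ev \<Rightarrow> ev \<Rightarrow> ev" is "(+)" by (simp add: par_add)
lift_definition minus_ev :: "ev \<Rightarrow> ev \<Rightarrow> ev" is "(-)" by (simp add: par_diff)
lift_definition uminus_ev :: "ev \<Rightarrow> ev" is uminus by (simp add: par_uminus)
lift_definition times_ev :: "ev \<Rightarrow> ev \<Rightarrow> ev" is "(*)" using par_mult by fastforce
instance
proof
  fix a b c :: ev
  show "a * b * c = a * (b * c)" by transfer (simp add: mult.assoc)
  show "a * b = b * a" by transfer (rule comm_ev)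
  show "a + b + c = a + (b + c)" by transfer (simp add: add.assoc)
  show "a + b = b + a" by transfer (simp add: add.commute)
  show "0 + a = a" by transfer simp
  show "- a + a = 0" by transfer simp
  show "a - b = a + - b" by transfer simp
  show "(a + b) * c = a * c + b * c" by transfer (simp add: distrib_right)
  show "1 * a = a" by transfer simp
  show "(0::ev) \<noteq> 1" by transfer simp
qed
end

lemma re_add: "re (a + b) = re a + re b" by transfer simp
lemma re_mult: "re (a * b) = re a * re b" by transfer simp
lemma re_zero: "re 0 = 0" by transfer simp
lemma re_one: "re 1 = 1" by transfer simp
lemma re_of_nat: "re (of_nat k) = of_nat k" by (induct k) (simp_all add: re_add re_one re_zero)

lemma ev_tf: "0 < k \<Longrightarrow> of_nat k * (c::ev) = 0 \<Longrightarrow> c = 0"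
proof -
  assume k: "0 < k" and h: "of_nat k * c = 0"
  have "of_nat k * re c = 0" using arg_cong[OF h, of re] by (simp add: re_mult re_of_nat re_zero)
  hence "re c = re 0" using gr_tf[OF k] by (simp add: re_zero)
  thus ?thesis by (simp only: re_inject)
qed



lemma par_pow: assumes A: "A \<in> carrier_mat n n" and od: "\<And>i j. i < n \<Longrightarrow> j < n \<Longrightarrow> par 1 (A $$ (i,j))"
  shows "i < n \<Longrightarrow> j < n \<Longrightarrow> par k ((A ^\<^sub>m k) $$ (i,j))"
proof (induct k arbitrary: i j)
  case 0 thus ?case using A by simp
next
  case (Suc k)
  have "(A ^\<^sub>m Suc k) $$ (i,j) = (\<Sum>l<n. (A ^\<^sub>m k) $$ (i,l) * A $$ (l,j))"
    by (simp only: pow_mat.simps) (rule mult_entry[OF pow_carrier_mat[OF A] A Suc(2,3)])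
  moreover have "par (Suc k) ((A ^\<^sub>m k) $$ (i,l) * A $$ (l,j))" if "l < n" for l
    using par_mult[OF Suc(1)[OF Suc(2) that] od[OF that Suc(3)]] by simp
  ultimately show ?case by (auto intro: par_sum)
qed

lemma mtr_mult: "A \<in> carrier_mat n n \<Longrightarrow> B \<in> carrier_mat n n \<Longrightarrow>
  mtr n (A * B) = (\<Sum>i<n. \<Sum>l<n. A $$ (i,l) * B $$ (l,i))"
  unfolding mtr_def by (intro sum.cong refl) (rule mult_entry, auto)

lemma gr_two: "(t::gr) = - t \<Longrightarrow> t = 0"
proof -
  assume "t = - t"
  hence "of_nat 2 * t = 0" by (metis add_eq_0_iff mult_2 of_nat_numeral)
  thus ?thesis using gr_tf[of 2 t] by simp
qed

lemma trace_even_zero: assumes A: "A \<in> carrier_mat n n" and od: "\<And>i j. i < n \<Longrightarrow> j < n \<Longrightarrow> par 1 (A $$ (i,j))"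
  and k: "odd m" shows "mtr n (A ^\<^sub>m Suc m) = 0"
proof -
  have pm: "par m ((A ^\<^sub>m m) $$ (i,j))" if "i < n" "j < n" for i j using par_pow[OF A od that] .
  have "mtr n (A ^\<^sub>m Suc m) = (\<Sum>i<n. \<Sum>l<n. A $$ (i,l) * (A ^\<^sub>m m) $$ (l,i))"
    unfolding pow_mat_Suc_left[OF A] by (rule mtr_mult[OF A pow_carrier_mat[OF A]])
  also have "\<dots> = (\<Sum>i<n. \<Sum>l<n. - ((A ^\<^sub>m m) $$ (l,i) * A $$ (i,l)))"
  proof (intro sum.cong refl)
    fix i l assume "i \<in> {..<n}" "l \<in> {..<n}"
    hence il: "i < n" "l < n" by auto
    show "A $$ (i,l) * (A ^\<^sub>m m) $$ (l,i) = - ((A ^\<^sub>m m) $$ (l,i) * A $$ (i,l))"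
      using comm_gen[OF pm[OF il(2) il(1)] od[OF il]] k by simp
  qed
  also have "\<dots> = - (\<Sum>l<n. \<Sum>i<n. (A ^\<^sub>m m) $$ (l,i) * A $$ (i,l))"
    by (subst sum.swap) (simp add: sum_negf)
  also have "\<dots> = - mtr n (A ^\<^sub>m Suc m)"
    unfolding pow_mat.simps using mtr_mult[OF pow_carrier_mat[OF A] A] by simp
  finally show ?thesis by (rule gr_two)
qed

interpretation reh: semiring_hom re
  by unfold_locales (simp_all add: re_add re_mult re_one re_zero)

lemma pow_sq: assumes A: "A \<in> carrier_mat n n" shows "(A * A) ^\<^sub>m k = A ^\<^sub>m (2 * k)"
proof (induct k)
  case 0 thus ?case using A by simp
next
  case (Suc k)
  have "(A * A) ^\<^sub>m Suc k = A ^\<^sub>m (2 * k) * (A * A)" using Suc by simp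
  also have "\<dots> = A ^\<^sub>m (2 * k) * A * A" using A by (simp add: assoc_mult_mat[symmetric, of _ n n _ n _ n])
  also have "\<dots> = A ^\<^sub>m (2 * Suc k)" by simp
  finally show ?case .
qed

lemma rosset: assumes A: "A \<in> carrier_mat n n" and od: "\<And>i j. i < n \<Longrightarrow> j < n \<Longrightarrow> par 1 (A $$ (i,j))"
  shows "A ^\<^sub>m (2 * n) = 0\<^sub>m n n"
proof -
  define Y where "Y = A * A"
  have Y: "Y \<in> carrier_mat n n" using A unfolding Y_def by simp
  have pY: "par 0 (Y $$ (i,j))" if "i < n" "j < n" for i j
  proof -
    have "par 2 ((A ^\<^sub>m 2) $$ (i,j))" by (rule par_pow[OF A od that])
    hence "par (2 mod 2) ((A ^\<^sub>m 2) $$ (i,j))" using par_mod by blast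
    thus ?thesis using A unfolding Y_def by (simp add: numeral_2_eq_2)
  qed
  define Ye where "Ye = mat n n (\<lambda>(i,j). Abs_ev (Y $$ (i,j)))"
  have Ye: "Ye \<in> carrier_mat n n" unfolding Ye_def by simp
  have mYe: "map_mat re Ye = Y" unfolding Ye_def using Y pY by (auto intro!: eq_matI simp: Abs_ev_inverse)
  have powY: "map_mat re (Ye ^\<^sub>m k) = A ^\<^sub>m (2 * k)" for k
    using reh.mat_hom_pow[OF Ye, of k] mYe pow_sq[OF A] unfolding Y_def by simp
  have tr: "mtr n (Ye ^\<^sub>m k) = 0" if "1 \<le> k" for k
  proof -
    have "re (mtr n (Ye ^\<^sub>m k)) = mtr n (map_mat re (Ye ^\<^sub>m k))"
      unfolding mtr_def using Ye by (simp add: reh.hom_sum)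
    also have "\<dots> = mtr n (A ^\<^sub>m Suc (2 * k - 1))" unfolding powY using that by simp
    also have "\<dots> = 0" by (rule trace_even_zero[OF A od]) (use that in auto)
    finally show ?thesis using re_inject re_zero by metis
  qed
  have "Ye ^\<^sub>m n = 0\<^sub>m n n" by (rule nilpotent_of_traces[OF _ Ye tr]) (rule ev_tf)
  hence "map_mat re (Ye ^\<^sub>m n) = 0\<^sub>m n n" by (auto intro!: eq_matI simp: reh.hom_zero)
  thus ?thesis unfolding powY .
qed



definition g :: "nat \<Rightarrow> gr" where "g m = Abs_gr (ext_gen m)"
lemma rg_g: "rg (g m) = ext_gen m" unfolding g_def by (simp add: Abs_gr_inverse fin0_gen)
lemma par_g: "par 1 (g m)" unfolding par_def rg_g ext_gen_def by auto

definition avoid :: "nat \<Rightarrow> gr \<Rightarrow> bool" where "avoid N w \<longleftrightarrow> (\<forall>S. N \<in> S \<longrightarrow> rg w S = 0)"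
lemma avoid_zero[simp]: "avoid N 0" unfolding avoid_def rg_zero ext_zero_def by simp
lemma avoid_one[simp]: "avoid N 1" unfolding avoid_def rg_one ext_one_def by auto
lemma avoid_g: "m \<noteq> N \<Longrightarrow> avoid N (g m)" unfolding avoid_def rg_g ext_gen_def by auto
lemma avoid_add: "avoid N a \<Longrightarrow> avoid N b \<Longrightarrow> avoid N (a + b)" unfolding avoid_def rg_add ext_add_def by simp
lemma avoid_uminus: "avoid N a \<Longrightarrow> avoid N (- a)" unfolding avoid_def rg_uminus ext_smul_def by simp
lemma avoid_sum: "(\<And>x. x \<in> A \<Longrightarrow> avoid N (f x)) \<Longrightarrow> avoid N (sum f A)"
  by (induct A rule: infinite_finite_induct) (auto intro: avoid_add)
lemma avoid_mult: assumes a: "avoid N a" and b: "avoid N b" shows "avoid N (a * b)"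
  unfolding avoid_def
proof (intro allI impI)
  fix U assume U: "N \<in> U"
  have "ext_sign S (U - S) * rg a S * rg b (U - S) = 0" if "S \<in> Pow U" for S
    using a b U unfolding avoid_def by (cases "N \<in> S") auto
  thus "rg (a * b) U = 0" unfolding rg_mult ext_mul_def by (intro sum.neutral) blast
qed

lemma cancel_g: assumes w: "avoid N w" and h: "w * g N = 0" shows "w = 0"
proof -
  have "rg w S = 0" for S
  proof (cases "finite S \<and> N \<notin> S")
    case False thus ?thesis using w rg_fin0 unfolding avoid_def by blast
  next
    case True
    define U where "U = insert N S"
    have "rg (w * g N) U = (\<Sum>T\<in>Pow U. if T = S then ext_sign S {N} * rg w S else 0)"
      unfolding rg_mult ext_mul_def rg_g
    proof (rule sum.cong[OF refl])
      fix T assume T: "T \<in> Pow U"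
      show "ext_sign T (U - T) * rg w T * ext_gen N (U - T) = (if T = S then ext_sign S {N} * rg w S else 0)"
      proof (cases "T = S")
        case True
        hence "U - T = {N}" using \<open>finite S \<and> N \<notin> S\<close> unfolding U_def by auto
        thus ?thesis using True by (simp add: ext_gen_def)
      next
        case False
        have "U - T \<noteq> {N}"
        proof
          assume "U - T = {N}"
          hence "T = S" using T \<open>finite S \<and> N \<notin> S\<close> unfolding U_def by auto
          thus False using False by simp
        qed
        thus ?thesis using False by (simp add: ext_gen_def)
      qed
    qed
    also have "\<dots> = ext_sign S {N} * rg w S" unfolding U_def using True by (subst sum.delta) auto
    finally have "ext_sign S {N} * rg w S = 0" using h by (simp add: rg_zero ext_zero_def)
    moreover have "ext_sign S {N} \<noteq> 0" unfolding ext_sign_def by simp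
    ultimately show ?thesis by simp
  qed
  hence "rg w = rg 0" by (auto simp: rg_zero ext_zero_def)
  thus ?thesis by (simp only: rg_inject)
qed

lemma ee: assumes e: "par 1 e" shows "e * e = 0"
  using comm_gen[OF e e] by (intro gr_two) simp

lemma eye: assumes e: "par 1 e" and y: "par k y" shows "e * y * e = 0"
proof -
  have "y * e = (if odd k then - (e * y) else e * y)" using comm_gen[OF e y] by simp
  hence "e * y * e = (if odd k then - (e * e * y) else e * e * y)" by (simp add: mult.assoc)
  thus ?thesis using ee[OF e] by simp
qed


lemma expand:
  assumes X: "X \<in> carrier_mat n n" and od: "\<And>i j. i < n \<Longrightarrow> j < n \<Longrightarrow> par 1 (X $$ (i,j))"
    and e: "par 1 e" and p: "p < n" and q: "q < n"
    and Z: "Z = mat n n (\<lambda>(i,j). if i = p \<and> j = q then e else 0)"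
  shows "i < n \<Longrightarrow> j < n \<Longrightarrow> ((X + Z) ^\<^sub>m m) $$ (i,j) =
    (X ^\<^sub>m m) $$ (i,j) + (\<Sum>a<m. (X ^\<^sub>m a) $$ (i,p) * e * (X ^\<^sub>m (m - Suc a)) $$ (q,j))"
proof (induct m arbitrary: i j)
  case 0 thus ?case using X Z by simp
next
  case (Suc m)
  have XZ: "X + Z \<in> carrier_mat n n" using X Z by simp
  define S where "S l = (\<Sum>a<m. (X ^\<^sub>m a) $$ (i,p) * e * (X ^\<^sub>m (m - Suc a)) $$ (q,l))" for l
  define z where "z l = (if l = p \<and> j = q then e else 0)" for l
  have "((X + Z) ^\<^sub>m Suc m) $$ (i,j) = (\<Sum>l<n. ((X + Z) ^\<^sub>m m) $$ (i,l) * (X + Z) $$ (l,j))"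
    by (simp only: pow_mat.simps) (rule mult_entry[OF pow_carrier_mat[OF XZ] XZ Suc(2,3)])
  also have "\<dots> = (\<Sum>l<n. ((X ^\<^sub>m m) $$ (i,l) + S l) * (X $$ (l,j) + z l))"
    using Suc X Z unfolding S_def z_def by (intro sum.cong refl) auto
  also have "\<dots> = (\<Sum>l<n. (X ^\<^sub>m m) $$ (i,l) * X $$ (l,j)) + (\<Sum>l<n. (X ^\<^sub>m m) $$ (i,l) * z l)
      + (\<Sum>l<n. S l * X $$ (l,j)) + (\<Sum>l<n. S l * z l)"
    by (simp add: algebra_simps sum.distrib)
  also have "(\<Sum>l<n. (X ^\<^sub>m m) $$ (i,l) * X $$ (l,j)) = (X ^\<^sub>m Suc m) $$ (i,j)"
    by (simp only: pow_mat.simps) (rule mult_entry[OF pow_carrier_mat[OF X] X Suc(2,3), symmetric])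
  also have "(\<Sum>l<n. (X ^\<^sub>m m) $$ (i,l) * z l) = (X ^\<^sub>m m) $$ (i,p) * e * (X ^\<^sub>m 0) $$ (q,j)"
  proof -
    have "(\<Sum>l<n. (X ^\<^sub>m m) $$ (i,l) * z l) = (\<Sum>l<n. if l = p then (if j = q then (X ^\<^sub>m m) $$ (i,p) * e else 0) else 0)"
      unfolding z_def by (intro sum.cong refl) auto
    also have "\<dots> = (if j = q then (X ^\<^sub>m m) $$ (i,p) * e else 0)" using p by (simp add: sum.delta)
    finally show ?thesis using q Suc X by auto
  qed
  also have "(\<Sum>l<n. S l * z l) = 0"
  proof -
    have "S p * e = 0"
    proof -
      have "S p * e = (\<Sum>a<m. (X ^\<^sub>m a) $$ (i,p) * (e * (X ^\<^sub>m (m - Suc a)) $$ (q,p) * e))"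
        unfolding S_def by (simp add: sum_distrib_right mult.assoc)
      also have "\<dots> = 0" using eye[OF e par_pow[OF X od q p]] by simp
      finally show ?thesis .
    qed
    hence "S l * z l = 0" for l unfolding z_def by auto
    thus ?thesis by simp
  qed
  also have "(\<Sum>l<n. S l * X $$ (l,j)) = (\<Sum>a<m. (X ^\<^sub>m a) $$ (i,p) * e * (X ^\<^sub>m (Suc m - Suc a)) $$ (q,j))"
  proof -
    have "(\<Sum>l<n. S l * X $$ (l,j)) = (\<Sum>a<m. (X ^\<^sub>m a) $$ (i,p) * e * (\<Sum>l<n. (X ^\<^sub>m (m - Suc a)) $$ (q,l) * X $$ (l,j)))"
      unfolding S_def by (simp add: sum_distrib_right sum_distrib_left mult.assoc) (rule sum.swap)
    also have "\<dots> = (\<Sum>a<m. (X ^\<^sub>m a) $$ (i,p) * e * (X ^\<^sub>m (Suc m - Suc a)) $$ (q,j))"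
    proof (intro sum.cong refl)
      fix a assume a: "a \<in> {..<m}"
      have "(\<Sum>l<n. (X ^\<^sub>m (m - Suc a)) $$ (q,l) * X $$ (l,j)) = (X ^\<^sub>m Suc (m - Suc a)) $$ (q,j)"
        by (simp only: pow_mat.simps) (rule mult_entry[OF pow_carrier_mat[OF X] X q Suc(3), symmetric])
      also have "Suc (m - Suc a) = Suc m - Suc a" using a by auto
      finally show "(X ^\<^sub>m a) $$ (i,p) * e * (\<Sum>l<n. (X ^\<^sub>m (m - Suc a)) $$ (q,l) * X $$ (l,j)) =
        (X ^\<^sub>m a) $$ (i,p) * e * (X ^\<^sub>m (Suc m - Suc a)) $$ (q,j)" by simp
    qed
    finally show ?thesis .
  qed
  finally show ?case by (simp add: algebra_simps)
qed


lemma sum_even_odd: "(\<Sum>a<2*(n::nat). f a) = (\<Sum>k<n. f (2*k) + f (2*k+1))"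
  by (induct n) (simp_all add: sum.distrib algebra_simps)

lemma key_identity:
  assumes X: "X \<in> carrier_mat n n" and od: "\<And>i j. i < n \<Longrightarrow> j < n \<Longrightarrow> par 1 (X $$ (i,j))"
    and av: "\<And>i j. i < n \<Longrightarrow> j < n \<Longrightarrow> avoid N (X $$ (i,j))"
    and q: "q < n" and j: "j < n"
  shows "(\<Sum>k<n. mtr n (X ^\<^sub>m (2*k+1)) * (X ^\<^sub>m (2*n-2-2*k)) $$ (q,j)) = of_nat n * (X ^\<^sub>m (2*n-1)) $$ (q,j)"
proof -
  define e where "e = g N"
  have e: "par 1 e" unfolding e_def by (rule par_g)
  define sg :: "nat \<Rightarrow> gr \<Rightarrow> gr" where "sg b t = (if odd b then - t else t)" for b t
  have avp: "avoid N ((X ^\<^sub>m k) $$ (i,l))" if "i < n" "l < n" for k i l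
    using that
  proof (induct k arbitrary: i l)
    case 0 thus ?case using X by simp
  next
    case (Suc k)
    have "(X ^\<^sub>m Suc k) $$ (i,l) = (\<Sum>r<n. (X ^\<^sub>m k) $$ (i,r) * X $$ (r,l))"
      by (simp only: pow_mat.simps) (rule mult_entry[OF pow_carrier_mat[OF X] X Suc(2,3)])
    thus ?case using Suc av by (auto intro!: avoid_sum avoid_mult)
  qed
  have wp: "(\<Sum>a<2*n. sg (2*n - Suc a) ((X ^\<^sub>m a) $$ (p,p) * (X ^\<^sub>m (2*n - Suc a)) $$ (q,j))) = 0"
    if p: "p < n" for p
  proof -
    define Z where "Z = mat n n (\<lambda>(i,j). if i = p \<and> j = q then e else 0)"
    have XZ: "X + Z \<in> carrier_mat n n" using X unfolding Z_def by simp
    have odZ: "par 1 ((X + Z) $$ (i,l))" if "i < n" "l < n" for i l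
      using that X od[OF that] e unfolding Z_def by (auto intro: par_add)
    have "((X + Z) ^\<^sub>m (2*n)) $$ (p,j) = (X ^\<^sub>m (2*n)) $$ (p,j) +
      (\<Sum>a<2*n. (X ^\<^sub>m a) $$ (p,p) * e * (X ^\<^sub>m (2*n - Suc a)) $$ (q,j))"
      by (rule expand[OF X od e p q Z_def p j])
    hence s0: "(\<Sum>a<2*n. (X ^\<^sub>m a) $$ (p,p) * e * (X ^\<^sub>m (2*n - Suc a)) $$ (q,j)) = 0"
      using rosset[OF XZ odZ] rosset[OF X od] p j by simp
    have "(\<Sum>a<2*n. (X ^\<^sub>m a) $$ (p,p) * e * (X ^\<^sub>m (2*n - Suc a)) $$ (q,j)) =
      (\<Sum>a<2*n. sg (2*n - Suc a) ((X ^\<^sub>m a) $$ (p,p) * (X ^\<^sub>m (2*n - Suc a)) $$ (q,j))) * e"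
      unfolding sum_distrib_right
    proof (intro sum.cong refl)
      fix a
      have "e * (X ^\<^sub>m (2*n - Suc a)) $$ (q,j) = sg (2*n - Suc a) ((X ^\<^sub>m (2*n - Suc a)) $$ (q,j) * e)"
        using comm_gen[OF par_pow[OF X od q j] e] unfolding sg_def by simp
      thus "(X ^\<^sub>m a) $$ (p,p) * e * (X ^\<^sub>m (2*n - Suc a)) $$ (q,j) =
        sg (2*n - Suc a) ((X ^\<^sub>m a) $$ (p,p) * (X ^\<^sub>m (2*n - Suc a)) $$ (q,j)) * e"
        unfolding sg_def by (simp add: mult.assoc)
    qed
    with s0 have "(\<Sum>a<2*n. sg (2*n - Suc a) ((X ^\<^sub>m a) $$ (p,p) * (X ^\<^sub>m (2*n - Suc a)) $$ (q,j))) * g N = 0"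
      unfolding e_def by simp
    thus ?thesis
      by (rule cancel_g[rotated]) (auto intro!: avoid_sum avoid_mult avp avoid_uminus simp: sg_def p q j)
  qed
  have "(\<Sum>a<2*n. sg (2*n - Suc a) (mtr n (X ^\<^sub>m a) * (X ^\<^sub>m (2*n - Suc a)) $$ (q,j))) =
     (\<Sum>a<2*n. \<Sum>p<n. sg (2*n - Suc a) ((X ^\<^sub>m a) $$ (p,p) * (X ^\<^sub>m (2*n - Suc a)) $$ (q,j)))"
    by (intro sum.cong refl) (simp add: sg_def mtr_def sum_distrib_right sum_negf)
  also have "\<dots> = (\<Sum>p<n. \<Sum>a<2*n. sg (2*n - Suc a) ((X ^\<^sub>m a) $$ (p,p) * (X ^\<^sub>m (2*n - Suc a)) $$ (q,j)))"
    by (rule sum.swap)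
  also have "\<dots> = 0" using wp by simp
  finally have "(\<Sum>a<2*n. sg (2*n - Suc a) (mtr n (X ^\<^sub>m a) * (X ^\<^sub>m (2*n - Suc a)) $$ (q,j))) = 0" .
  hence "(\<Sum>k<n. sg (2*n - Suc (2*k)) (mtr n (X ^\<^sub>m (2*k)) * (X ^\<^sub>m (2*n - Suc (2*k))) $$ (q,j))
     + sg (2*n - Suc (2*k+1)) (mtr n (X ^\<^sub>m (2*k+1)) * (X ^\<^sub>m (2*n - Suc (2*k+1))) $$ (q,j))) = 0"
    by (simp only: sum_even_odd)
  also have "(\<Sum>k<n. sg (2*n - Suc (2*k)) (mtr n (X ^\<^sub>m (2*k)) * (X ^\<^sub>m (2*n - Suc (2*k))) $$ (q,j))
     + sg (2*n - Suc (2*k+1)) (mtr n (X ^\<^sub>m (2*k+1)) * (X ^\<^sub>m (2*n - Suc (2*k+1))) $$ (q,j))) =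
     (\<Sum>k<n. (if k = 0 then - (of_nat n * (X ^\<^sub>m (2*n-1)) $$ (q,j)) else 0)
     + mtr n (X ^\<^sub>m (2*k+1)) * (X ^\<^sub>m (2*n-2-2*k)) $$ (q,j))"
  proof (intro sum.cong refl)
    fix k assume k: "k \<in> {..<n}"
    have o1: "odd (2*n - Suc (2*k))" using k by auto
    have o2: "\<not> odd (2*n - Suc (2*k+1))" using k by auto
    have t0: "sg (2*n - Suc (2*k)) (mtr n (X ^\<^sub>m (2*k)) * (X ^\<^sub>m (2*n - Suc (2*k))) $$ (q,j)) =
       (if k = 0 then - (of_nat n * (X ^\<^sub>m (2*n-1)) $$ (q,j)) else 0)"
    proof (cases "k = 0")
      case True
      have "mtr n (X ^\<^sub>m 0) = of_nat n" using X by (simp add: mtr_def)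
      thus ?thesis using True o1 unfolding sg_def by simp
    next
      case False
      have "mtr n (X ^\<^sub>m (Suc (2*k - 1))) = 0" by (rule trace_even_zero[OF X od]) (use False in auto)
      moreover have "Suc (2*k - 1) = 2*k" using False by auto
      ultimately show ?thesis using False unfolding sg_def by simp
    qed
    have "2*n - Suc (2*k+1) = 2*n-2-2*k" by simp
    thus "sg (2*n - Suc (2*k)) (mtr n (X ^\<^sub>m (2*k)) * (X ^\<^sub>m (2*n - Suc (2*k))) $$ (q,j))
     + sg (2*n - Suc (2*k+1)) (mtr n (X ^\<^sub>m (2*k+1)) * (X ^\<^sub>m (2*n - Suc (2*k+1))) $$ (q,j)) =
     (if k = 0 then - (of_nat n * (X ^\<^sub>m (2*n-1)) $$ (q,j)) else 0)
     + mtr n (X ^\<^sub>m (2*k+1)) * (X ^\<^sub>m (2*n-2-2*k)) $$ (q,j)"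
      using t0 o2 unfolding sg_def by simp
  qed
  also have "\<dots> = - (of_nat n * (X ^\<^sub>m (2*n-1)) $$ (q,j)) + (\<Sum>k<n. mtr n (X ^\<^sub>m (2*k+1)) * (X ^\<^sub>m (2*n-2-2*k)) $$ (q,j))"
    using q by (simp add: sum.distrib sum.delta)
  finally show ?thesis by (simp add: algebra_simps)
qed


definition Xg :: "nat \<Rightarrow> gr mat" where "Xg n = mat n n (\<lambda>(i,j). g (i*n+j))"

lemma Xg_link: assumes "i < n" "j < n"
  shows "rg ((Xg n ^\<^sub>m m) $$ (i,j)) = emat_pow n (genX n) m i j"
  using assms
proof (induct m arbitrary: i j)
  case 0 thus ?case by (simp add: Xg_def emat_id_def rg_one rg_zero)
next
  case (Suc m)
  have X: "Xg n \<in> carrier_mat n n" unfolding Xg_def by simp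
  have "(Xg n ^\<^sub>m Suc m) $$ (i,j) = (\<Sum>l<n. (Xg n ^\<^sub>m m) $$ (i,l) * Xg n $$ (l,j))"
    by (simp only: pow_mat.simps) (rule mult_entry[OF pow_carrier_mat[OF X] X Suc(2,3)])
  hence "rg ((Xg n ^\<^sub>m Suc m) $$ (i,j)) = ext_sum (\<lambda>l. ext_mul (rg ((Xg n ^\<^sub>m m) $$ (i,l))) (rg (Xg n $$ (l,j)))) {..<n}"
    by (simp add: rg_sum rg_mult)
  also have "\<dots> = ext_sum (\<lambda>l. ext_mul (emat_pow n (genX n) m i l) (genX n l j)) {..<n}"
  proof -
    have "ext_mul (rg ((Xg n ^\<^sub>m m) $$ (i,l))) (rg (Xg n $$ (l,j))) = ext_mul (emat_pow n (genX n) m i l) (genX n l j)"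
      if "l \<in> {..<n}" for l
      using Suc(1)[OF Suc(2), of l] that Suc(3) by (simp add: Xg_def rg_g genX_def)
    thus ?thesis unfolding ext_sum_def by simp
  qed
  finally show ?case by (simp add: emat_mul_def)
qed

lemma idx_lt: "i < n \<Longrightarrow> j < n \<Longrightarrow> i * n + j < n * (n::nat)"
proof -
  assume "i < n" "j < n"
  hence "i * n + j < i * n + n" by simp
  also have "\<dots> = (i + 1) * n" by simp
  also have "\<dots> \<le> n * n" using \<open>i < n\<close> mult_le_mono1[of "Suc i" n n] by simp
  finally show ?thesis .
qed

theorem theorem2p1:
  fixes n :: nat
  shows "\<forall>i<n. \<forall>j<n.
    ext_diff (ext_smul (of_nat n) (emat_pow n (genX n) (2 * n - 1) i j))
      (ext_sum (\<lambda>k. ext_mul (emat_tr n (emat_pow n (genX n) (2 * k + 1)))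
                              (emat_pow n (genX n) (2 * n - 2 - 2 * k) i j)) {..<n})
    = ext_zero"
proof (intro allI impI)
  fix i j assume i: "i < n" and j: "j < n"
  define X where "X = Xg n"
  have X: "X \<in> carrier_mat n n" unfolding X_def Xg_def by simp
  have od: "par 1 (X $$ (a,b))" if "a < n" "b < n" for a b
  proof -
    have "X $$ (a,b) = g (a*n+b)" using that unfolding X_def Xg_def by simp
    thus ?thesis using par_g by (simp only:)
  qed
  have av: "avoid (n*n) (X $$ (a,b))" if "a < n" "b < n" for a b
    using that idx_lt[OF that] unfolding X_def Xg_def by (simp add: avoid_g)
  have P: "emat_pow n (genX n) m a b = rg ((X ^\<^sub>m m) $$ (a,b))" if "a < n" "b < n" for m a b
    using Xg_link[OF that] unfolding X_def by simp
  have Tr: "emat_tr n (emat_pow n (genX n) m) = rg (mtr n (X ^\<^sub>m m))" for m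
    unfolding emat_tr_def mtr_def rg_sum ext_sum_def by (auto simp: P fun_eq_iff intro!: sum.cong)
  have K: "(\<Sum>k<n. mtr n (X ^\<^sub>m (2*k+1)) * (X ^\<^sub>m (2*n-2-2*k)) $$ (i,j)) = of_nat n * (X ^\<^sub>m (2*n-1)) $$ (i,j)"
    by (rule key_identity[OF X od av i j])
  have "ext_diff (ext_smul (of_nat n) (emat_pow n (genX n) (2 * n - 1) i j))
      (ext_sum (\<lambda>k. ext_mul (emat_tr n (emat_pow n (genX n) (2 * k + 1)))
                              (emat_pow n (genX n) (2 * n - 2 - 2 * k) i j)) {..<n})
    = rg (of_nat n * (X ^\<^sub>m (2*n-1)) $$ (i,j) - (\<Sum>k<n. mtr n (X ^\<^sub>m (2*k+1)) * (X ^\<^sub>m (2*n-2-2*k)) $$ (i,j)))"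
  proof -
    have sm: "rg (of_nat n * a) = ext_smul (of_nat n) (rg a)" for a
      by (simp add: ext_smul_def rg_of_nat_mult fun_eq_iff)
    show ?thesis unfolding rg_diff sm unfolding rg_sum rg_mult P[OF i j] Tr by simp
  qed
  also have "\<dots> = ext_zero" unfolding K by (simp add: rg_zero)
  finally show "ext_diff (ext_smul (of_nat n) (emat_pow n (genX n) (2 * n - 1) i j))
      (ext_sum (\<lambda>k. ext_mul (emat_tr n (emat_pow n (genX n) (2 * k + 1)))
                              (emat_pow n (genX n) (2 * n - 2 - 2 * k) i j)) {..<n})
    = ext_zero" .
qed


end
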